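(* Let $X$ be a compact metric space, $f_1,f_2:X\to X$ continuous and $F=\{f_1,f_2\}$. The following are equivalent: (1) $F$ has the (Hausdorff metric) shadowing property; (2) $F^k$ has the shadowing property for every integer $k>1$; (3) $F^k$ has the shadowing property for some integer $k>1$.
   Context: Throughout, $(X,d)$ is a compact metric space, $\mathbb{N}=\{0,1,2,\dots\}$. $\mathbb{K}(X)$ is the set of nonempty compact subsets of $X$ with the Hausdorff metric $d_H(A,B)=\max\{\sup_{a\in A}\inf_{b\in B}d(a,b),\sup_{b\in B}\inf_{a\in A}d(a,b)\}$; a point $x$ is identified with $\{x\}$. Multiple mappings: $F=\{f_1,f_2\}$ maps $x$ to $F(x)=\{f_1(x),f_2(x)\}$; for $n\ge1$, $F^n(x)=\{f_{i_1}\cdots f_{i_n}(x): i_1,\dots,i_n\in\{1,2\}\}$, $F^0(x)=\{x\}$; for $A\in\mathbb{K}(X)$, $F^n(A)=\bigcup_{a\in A}F^n(a)$. For $k\ge1$, $F^k$ is regarded as the multiple mappings consisting of the $2^k$ maps $f_{i_1}\cdots f_{i_k}$, so $(F^k)^n=F^{kn}$. Shadowing: for $G=F$ or $G=F^k$, a sequence $\{A_n\}_{n\ge0}\subset\mathbb{K}(X)$ with $A_0$ a singleton is a $\delta$-pseudo orbit of $G$ if $d_H(G(A_n),A_{n+1})\le\delta$ for all $n\in\mathbb{N}$. $G$ has the shadowing property if for every $\epsilon>0$ there is $\delta>0$ such that for every $\delta$-pseudo orbit $\{A_n\}$ of $G$ there is $y\in X$ with $d_H(G^n(y),A_n)<\epsilon$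 for all $n\in\mathbb{N}$. *)

theory Defs
  imports "HOL-Analysis.Analysis"
begin

definition hdist :: "'a::metric_space set \<Rightarrow> 'a set \<Rightarrow> real" where
  "hdist A B = max (SUP a\<in>A. INF b\<in>B. dist a b) (SUP b\<in>B. INF a\<in>A. dist a b)"

text \<open>A multiple mapping is represented by the set of its constituent maps.
  mm_iter G n is the set of all n-fold compositions g_1 \<circ> ... \<circ> g_n with g_i \<in> G
  (mm_iter G 0 = {id}).  So F^k is mm_iter F k.\<close>
fun mm_iter :: "('a \<Rightarrow> 'a) set \<Rightarrow> nat \<Rightarrow> ('a \<Rightarrow> 'a) set" where
  "mm_iter G 0 = {id}"
| "mm_iter G (Suc n) = {g \<circ> h | g h. g \<in> G \<and> h \<in> mm_iter G n}"

definition mm_orbit :: "('a \<Rightarrow> 'a) set \<Rightarrow> nat \<Rightarrow> 'a \<Rightarrow> 'a set" where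
  "mm_orbit G n x = {g x | g. g \<in> mm_iter G n}"

definition mm_image :: "('a \<Rightarrow> 'a) set \<Rightarrow> 'a set \<Rightarrow> 'a set" where
  "mm_image G A = (\<Union>a\<in>A. {g a | g. g \<in> G})"

definition pseudo_orbit :: "('a::metric_space \<Rightarrow> 'a) set \<Rightarrow> real \<Rightarrow> (nat \<Rightarrow> 'a set) \<Rightarrow> bool" where
  "pseudo_orbit G \<delta> A \<longleftrightarrow>
     (\<forall>n. A n \<noteq> {} \<and> compact (A n)) \<and> (\<exists>x0. A 0 = {x0}) \<and>
     (\<forall>n. hdist (mm_image G (A n)) (A (Suc n)) \<le> \<delta>)"

definition shadowing :: "('a::metric_space \<Rightarrow> 'a) set \<Rightarrow> bool" where
  "shadowing G \<longleftrightarrow>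
     (\<forall>\<epsilon>>0. \<exists>\<delta>>0. \<forall>A. pseudo_orbit G \<delta> A \<longrightarrow>
        (\<exists>y. \<forall>n. hdist (mm_orbit G n y) (A n) < \<epsilon>))"

end

theory Submission
  imports Defs
begin

lemma bdd_infdist:
  assumes "bounded (UNIV::'a::metric_space set)"
  shows "bdd_above ((\<lambda>a. infdist a (B::'a set)) ` A)"
proof -
  obtain e where e: "\<forall>x\<in>(UNIV::'a set). \<forall>y\<in>UNIV. dist x y \<le> e"
    using assms bounded_two_points by blast
  show ?thesis
  proof (cases "B = {}")
    case True then show ?thesis by (auto simp: infdist_def intro: bdd_aboveI2)
  next
    case False
    then obtain b where "b \<in> B" by auto
    then have "infdist a B \<le> e" for a using infdist_le[of b B a] e by (meson UNIV_I order_trans)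
    then show ?thesis by (rule bdd_aboveI2)
  qed
qed

lemma hdist_le_iff:
  assumes "bounded (UNIV::'a::metric_space set)" "A \<noteq> {}" "B \<noteq> {}"
  shows "hdist (A::'a set) B \<le> r \<longleftrightarrow> (\<forall>a\<in>A. infdist a B \<le> r) \<and> (\<forall>b\<in>B. infdist b A \<le> r)"
proof -
  have e1: "(\<lambda>a. INF b\<in>B. dist a b) = (\<lambda>a. infdist a B)" by (simp add: infdist_notempty assms)
  have e2: "(\<lambda>b. INF a\<in>A. dist a b) = (\<lambda>b. infdist b A)" by (simp add: infdist_notempty assms dist_commute)
  have "hdist A B = max (SUP a\<in>A. infdist a B) (SUP b\<in>B. infdist b A)"
    unfolding hdist_def e1 e2 ..
  then show ?thesis
    using cSUP_le_iff[OF assms(2) bdd_infdist[OF assms(1)]] cSUP_le_iff[OF assms(3) bdd_infdist[OF assms(1)]]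
    by simp
qed

lemma infdist_lessE:
  assumes "B \<noteq> {}" "infdist x B < e" shows "\<exists>b\<in>B. dist x b < e"
proof -
  have "bdd_below ((\<lambda>b. dist x b) ` B)" by (auto intro: bdd_belowI2[where m=0])
  then show ?thesis using assms by (simp add: infdist_notempty cINF_less_iff)
qed

lemma infdist_via:
  assumes "B \<noteq> {}" "\<forall>b\<in>B. infdist x C \<le> h + dist x b"
  shows "infdist x C \<le> h + infdist x B"
proof -
  have "infdist x C - h \<le> (INF b\<in>B. dist x b)"
    using assms by (intro cINF_greatest) auto
  then show ?thesis using assms by (simp add: infdist_notempty)
qed

lemma hdist_self:
  assumes "bounded (UNIV::'a::metric_space set)" "A \<noteq> {}"
  shows "hdist (A::'a set) A \<le> 0"
  using hdist_le_iff[OF assms assms(2)] by simp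

lemma hdist_triangle:
  assumes "bounded (UNIV::'a::metric_space set)" "A \<noteq> {}" "B \<noteq> {}" "C \<noteq> {}"
  shows "hdist (A::'a set) C \<le> hdist A B + hdist B C"
proof -
  have AB: "(\<forall>a\<in>A. infdist a B \<le> hdist A B) \<and> (\<forall>b\<in>B. infdist b A \<le> hdist A B)"
    using hdist_le_iff[OF assms(1,2,3)] by blast
  have BC: "(\<forall>a\<in>B. infdist a C \<le> hdist B C) \<and> (\<forall>b\<in>C. infdist b B \<le> hdist B C)"
    using hdist_le_iff[OF assms(1,3,4)] by blast
  have 1: "infdist a C \<le> hdist A B + hdist B C" if "a \<in> A" for a
  proof -
    have "\<forall>b\<in>B. infdist a C \<le> hdist B C + dist a b"
      using BC infdist_triangle[of a C] by (smt (verit))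
    then have "infdist a C \<le> hdist B C + infdist a B" by (rule infdist_via[OF assms(3)])
    moreover have "infdist a B \<le> hdist A B" using AB that by blast
    ultimately show ?thesis by linarith
  qed
  have 2: "infdist c A \<le> hdist A B + hdist B C" if "c \<in> C" for c
  proof -
    have "\<forall>b\<in>B. infdist c A \<le> hdist A B + dist c b"
      using AB infdist_triangle[of c A] by (smt (verit))
    then have "infdist c A \<le> hdist A B + infdist c B" by (rule infdist_via[OF assms(3)])
    moreover have "infdist c B \<le> hdist B C" using BC that by blast
    ultimately show ?thesis by linarith
  qed
  show ?thesis using hdist_le_iff[OF assms(1,2,4)] 1 2 by blast
qed

lemma mm_image_Suc: "mm_image (mm_iter G (Suc n)) A = mm_image G (mm_image (mm_iter G n) A)"
proof
  show "mm_image (mm_iter G (Suc n)) A \<subseteq> mm_image G (mm_image (mm_iter G n) A)"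
    unfolding mm_image_def by fastforce
next
  show "mm_image G (mm_image (mm_iter G n) A) \<subseteq> mm_image (mm_iter G (Suc n)) A"
  proof
    fix z assume "z \<in> mm_image G (mm_image (mm_iter G n) A)"
    then obtain a g h where "a \<in> A" "g \<in> G" "h \<in> mm_iter G n" "z = g (h a)"
      unfolding mm_image_def by blast
    then show "z \<in> mm_image (mm_iter G (Suc n)) A"
    proof -
      have gh: "g \<circ> h \<in> mm_iter G (Suc n)" using \<open>g \<in> G\<close> \<open>h \<in> mm_iter G n\<close> by auto
      have "z = (g \<circ> h) a" using \<open>z = g (h a)\<close> by simp
      then show ?thesis using gh \<open>a \<in> A\<close> unfolding mm_image_def by blast
    qed
  qed
qed

lemma mm_image_id[simp]: "mm_image {id} A = A"
  unfolding mm_image_def by auto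

lemma mm_image_0: "mm_image (mm_iter G 0) A = A"
  by simp

lemma mm_image_add: "mm_image (mm_iter G (a+b)) A = mm_image (mm_iter G a) (mm_image (mm_iter G b) A)"
proof (induction a)
  case 0 then show ?case by simp
next
  case (Suc a) then show ?case by (simp only: add_Suc mm_image_Suc)
qed

lemma mm_image_iter_iter: "mm_image (mm_iter (mm_iter G k) n) A = mm_image (mm_iter G (k*n)) A"
proof (induction n)
  case 0 then show ?case by simp
next
  case (Suc n)
  have "mm_image (mm_iter (mm_iter G k) (Suc n)) A = mm_image (mm_iter G k) (mm_image (mm_iter G (k*n)) A)"
    by (simp only: mm_image_Suc Suc)
  also have "\<dots> = mm_image (mm_iter G (k + k*n)) A" by (simp add: mm_image_add)
  finally show ?case by simp
qed

lemma mm_orbit_image: "mm_orbit G n x = mm_image (mm_iter G n) {x}"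
  unfolding mm_orbit_def mm_image_def by auto

lemma mm_image_pair: "mm_image {f1, f2} A = f1 ` A \<union> f2 ` A"
  unfolding mm_image_def by auto

lemma mm_ne: "A \<noteq> {} \<Longrightarrow> mm_image (mm_iter {f1, f2} j) A \<noteq> {}"
proof (induction j)
  case 0 then show ?case by simp
next
  case (Suc j) then show ?case unfolding mm_image_Suc[of "{f1,f2}"] mm_image_pair by blast
qed

lemma mm_cpt:
  assumes "continuous_on UNIV f1" "continuous_on UNIV f2" "compact A"
  shows "compact (mm_image (mm_iter {f1, f2} j) A)"
proof (induction j)
  case 0 then show ?case using assms by simp
next
  case (Suc j)
  then show ?case unfolding mm_image_Suc[of "{f1,f2}"] mm_image_pair
    by (intro compact_Un compact_continuous_image continuous_on_subset[OF assms(1)]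
          continuous_on_subset[OF assms(2)]) auto
qed

lemma po_mono: "pseudo_orbit G d A \<Longrightarrow> d \<le> d' \<Longrightarrow> pseudo_orbit G d' A"
  unfolding pseudo_orbit_def by (meson order_trans)


lemma one_side:
  assumes "B \<noteq> {}" "\<forall>a\<in>A. infdist a B \<le> \<rho>" "\<rho> < d"
    "\<forall>x y. dist x y < d \<longrightarrow> dist (f1 x) (f1 y) < \<theta>"
    "\<forall>x y. dist x y < d \<longrightarrow> dist (f2 x) (f2 y) < \<theta>"
  shows "\<forall>z\<in>mm_image {f1, f2} A. infdist z (mm_image {f1, f2} B) \<le> \<theta>"
proof
  fix z assume "z \<in> mm_image {f1, f2} A"
  then obtain a f where a: "a \<in> A" "f = f1 \<or> f = f2" "z = f a" unfolding mm_image_pair by blast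
  then have "infdist a B < d" using assms by force
  then obtain b where b: "b \<in> B" "dist a b < d" using infdist_lessE[OF assms(1)] by blast
  have "dist (f a) (f b) < \<theta>" using a(2) b(2) assms(4,5) by blast
  moreover have "f b \<in> mm_image {f1, f2} B" using a(2) b(1) unfolding mm_image_pair by blast
  ultimately show "infdist z (mm_image {f1, f2} B) \<le> \<theta>"
    using a(3) infdist_le2 by (metis less_imp_le)
qed

lemma uc_image:
  assumes bd: "bounded (UNIV::'a::metric_space set)"
    and u1: "uniformly_continuous_on UNIV (f1::'a \<Rightarrow> 'a)"
    and u2: "uniformly_continuous_on UNIV f2" and th: "\<theta> > 0"
  shows "\<exists>\<rho>>0. \<forall>A B. A \<noteq> {} \<longrightarrow> B \<noteq> {} \<longrightarrow> hdist A B \<le> \<rho> \<longrightarrow>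
            hdist (mm_image {f1, f2} A) (mm_image {f1, f2} B) \<le> \<theta>"
proof -
  obtain d1 where d10: "d1 > 0" "\<forall>x\<in>UNIV. \<forall>x'\<in>UNIV. dist x' x < d1 \<longrightarrow> dist (f1 x') (f1 x) < \<theta>"
    using u1 th unfolding uniformly_continuous_on_def by blast
  have d1: "d1 > 0" "\<forall>x y. dist x y < d1 \<longrightarrow> dist (f1 x) (f1 y) < \<theta>"
    using d10 by auto
  obtain d2 where d20: "d2 > 0" "\<forall>x\<in>UNIV. \<forall>x'\<in>UNIV. dist x' x < d2 \<longrightarrow> dist (f2 x') (f2 x) < \<theta>"
    using u2 th unfolding uniformly_continuous_on_def by blast
  have d2: "d2 > 0" "\<forall>x y. dist x y < d2 \<longrightarrow> dist (f2 x) (f2 y) < \<theta>"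
    using d20 by auto
  define d where "d = min d1 d2"
  have dd: "d > 0" "\<forall>x y. dist x y < d \<longrightarrow> dist (f1 x) (f1 y) < \<theta>"
       "\<forall>x y. dist x y < d \<longrightarrow> dist (f2 x) (f2 y) < \<theta>"
    using d1 d2 unfolding d_def by auto
  show ?thesis
  proof (intro exI[of _ "d/2"] conjI allI impI)
    show "d/2 > 0" using dd by simp
    fix A B :: "'a set" assume A: "A \<noteq> {}" and B: "B \<noteq> {}" and h: "hdist A B \<le> d/2"
    have s: "(\<forall>a\<in>A. infdist a B \<le> d/2) \<and> (\<forall>b\<in>B. infdist b A \<le> d/2)"
      using h hdist_le_iff[OF bd A B] by blast
    have "d/2 < d" using dd by simp
    have 1: "\<forall>z\<in>mm_image {f1, f2} A. infdist z (mm_image {f1, f2} B) \<le> \<theta>"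
      using one_side[OF B _ \<open>d/2 < d\<close> dd(2,3)] s by blast
    have 2: "\<forall>z\<in>mm_image {f1, f2} B. infdist z (mm_image {f1, f2} A) \<le> \<theta>"
      using one_side[OF A _ \<open>d/2 < d\<close> dd(2,3)] s by blast
    have "mm_image {f1, f2} A \<noteq> {}" "mm_image {f1, f2} B \<noteq> {}"
      using A B unfolding mm_image_pair by auto
    then show "hdist (mm_image {f1, f2} A) (mm_image {f1, f2} B) \<le> \<theta>"
      using hdist_le_iff[OF bd] 1 2 by blast
  qed
qed

lemma uc_upto:
  assumes bd: "bounded (UNIV::'a::metric_space set)"
    and u1: "uniformly_continuous_on UNIV (f1::'a \<Rightarrow> 'a)"
    and u2: "uniformly_continuous_on UNIV f2"
  shows "\<theta> > 0 \<Longrightarrow> \<exists>\<rho>>0. \<forall>j\<le>k. \<forall>A B. A \<noteq> {} \<longrightarrow> B \<noteq> {} \<longrightarrow> hdist A B \<le> \<rho> \<longrightarrow>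
            hdist (mm_image (mm_iter {f1, f2} j) A) (mm_image (mm_iter {f1, f2} j) B) \<le> \<theta>"
proof (induction k arbitrary: \<theta>)
  case 0 then show ?case by (intro exI[of _ \<theta>]) auto
next
  case (Suc k)
  obtain \<rho>1 where r1: "\<rho>1 > 0" "\<forall>j\<le>k. \<forall>A B. A \<noteq> {} \<longrightarrow> B \<noteq> {} \<longrightarrow> hdist A B \<le> \<rho>1 \<longrightarrow>
            hdist (mm_image (mm_iter {f1, f2} j) A) (mm_image (mm_iter {f1, f2} j) B) \<le> \<theta>"
    using Suc.IH[OF Suc.prems] by blast
  obtain \<rho>' where r': "\<rho>' > 0" "\<forall>A B. A \<noteq> {} \<longrightarrow> B \<noteq> {} \<longrightarrow> hdist A B \<le> \<rho>' \<longrightarrow>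
            hdist (mm_image {f1, f2} A) (mm_image {f1, f2} B) \<le> \<theta>"
    using uc_image[OF bd u1 u2 Suc.prems] by blast
  obtain \<rho>2 where r2: "\<rho>2 > 0" "\<forall>j\<le>k. \<forall>A B. A \<noteq> {} \<longrightarrow> B \<noteq> {} \<longrightarrow> hdist A B \<le> \<rho>2 \<longrightarrow>
            hdist (mm_image (mm_iter {f1, f2} j) A) (mm_image (mm_iter {f1, f2} j) B) \<le> \<rho>'"
    using Suc.IH[OF r'(1)] by blast
  show ?case
  proof (intro exI[of _ "min \<rho>1 \<rho>2"] conjI allI impI)
    show "min \<rho>1 \<rho>2 > 0" using r1 r2 by simp
    fix j A B assume j: "j \<le> Suc k" and A: "A \<noteq> {}" and B: "B \<noteq> {}"
      and h: "hdist (A::'a set) B \<le> min \<rho>1 \<rho>2"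
    show "hdist (mm_image (mm_iter {f1, f2} j) A) (mm_image (mm_iter {f1, f2} j) B) \<le> \<theta>"
    proof (cases "j \<le> k")
      case True then show ?thesis using r1 A B h by auto
    next
      case False
      then have jk: "j = Suc k" using j by simp
      have "hdist (mm_image (mm_iter {f1, f2} k) A) (mm_image (mm_iter {f1, f2} k) B) \<le> \<rho>'"
        using r2 A B h by auto
      moreover have "mm_image (mm_iter {f1, f2} k) A \<noteq> {}" "mm_image (mm_iter {f1, f2} k) B \<noteq> {}"
        using mm_ne[OF A] mm_ne[OF B] by auto
      ultimately show ?thesis unfolding jk mm_image_Suc using r'(2) by simp
    qed
  qed
qed

lemma po_close:
  assumes bd: "bounded (UNIV::'a::metric_space set)"
    and u1: "uniformly_continuous_on UNIV (f1::'a \<Rightarrow> 'a)"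
    and u2: "uniformly_continuous_on UNIV f2"
  shows "\<theta> > 0 \<Longrightarrow> \<exists>\<delta>>0. \<forall>A. pseudo_orbit {f1, f2} \<delta> A \<longrightarrow>
            (\<forall>j\<le>k. \<forall>n. hdist (mm_image (mm_iter {f1, f2} j) (A n)) (A (n + j)) \<le> \<theta>)"
proof (induction k arbitrary: \<theta>)
  case 0
  show ?case
  proof (intro exI[of _ 1] conjI allI impI)
    fix A j n assume "pseudo_orbit {f1, f2} 1 A" "j \<le> (0::nat)"
    then have "A n \<noteq> {}" "j = 0" unfolding pseudo_orbit_def by auto
    then show "hdist (mm_image (mm_iter {f1, f2} j) (A n)) (A (n + j)) \<le> \<theta>"
      using hdist_self[OF bd \<open>A n \<noteq> {}\<close>] 0 by simp
  qed simp
next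
  case (Suc k)
  have th2: "\<theta>/2 > 0" using Suc.prems by simp
  obtain \<rho> where r: "\<rho> > 0" "\<forall>A B. A \<noteq> {} \<longrightarrow> B \<noteq> {} \<longrightarrow> hdist A B \<le> \<rho> \<longrightarrow>
            hdist (mm_image {f1, f2} A) (mm_image {f1, f2} B) \<le> \<theta>/2"
    using uc_image[OF bd u1 u2 th2] by blast
  obtain \<delta>1 where d1: "\<delta>1 > 0" "\<forall>A. pseudo_orbit {f1, f2} \<delta>1 A \<longrightarrow>
            (\<forall>j\<le>k. \<forall>n. hdist (mm_image (mm_iter {f1, f2} j) (A n)) (A (n + j)) \<le> \<theta>)"
    using Suc.IH[OF Suc.prems] by blast
  obtain \<delta>2 where d2: "\<delta>2 > 0" "\<forall>A. pseudo_orbit {f1, f2} \<delta>2 A \<longrightarrow>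
            (\<forall>j\<le>k. \<forall>n. hdist (mm_image (mm_iter {f1, f2} j) (A n)) (A (n + j)) \<le> \<rho>)"
    using Suc.IH[OF r(1)] by blast
  show ?case
  proof (intro exI[of _ "min \<delta>1 (min \<delta>2 (\<theta>/2))"] conjI allI impI)
    show "min \<delta>1 (min \<delta>2 (\<theta>/2)) > 0" using d1 d2 th2 by simp
    fix A j n assume po: "pseudo_orbit {f1, f2} (min \<delta>1 (min \<delta>2 (\<theta>/2))) A" and j: "j \<le> Suc k"
    have po1: "pseudo_orbit {f1, f2} \<delta>1 A" using po_mono[OF po] by simp
    have po2: "pseudo_orbit {f1, f2} \<delta>2 A" using po_mono[OF po] by simp
    have ne: "\<And>m. A m \<noteq> {}" using po unfolding pseudo_orbit_def by blast
    have step: "hdist (mm_image {f1, f2} (A m)) (A (Suc m)) \<le> \<theta>/2" for m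
    proof -
      have "hdist (mm_image {f1, f2} (A m)) (A (Suc m)) \<le> min \<delta>1 (min \<delta>2 (\<theta>/2))"
        using po unfolding pseudo_orbit_def by blast
      then show ?thesis by simp
    qed
    show "hdist (mm_image (mm_iter {f1, f2} j) (A n)) (A (n + j)) \<le> \<theta>"
    proof (cases "j \<le> k")
      case True then show ?thesis using d1(2) po1 by simp
    next
      case False
      then have jk: "j = Suc k" using j by simp
      have "hdist (mm_image (mm_iter {f1, f2} k) (A n)) (A (n + k)) \<le> \<rho>" using d2(2) po2 by simp
      then have a: "hdist (mm_image {f1, f2} (mm_image (mm_iter {f1, f2} k) (A n)))
                      (mm_image {f1, f2} (A (n + k))) \<le> \<theta>/2"
      proof -
        have "mm_image (mm_iter {f1, f2} k) (A n) \<noteq> {}" using mm_ne[OF ne[of n]] by auto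
        then show ?thesis using r(2) ne \<open>hdist (mm_image (mm_iter {f1, f2} k) (A n)) (A (n + k)) \<le> \<rho>\<close> by simp
      qed
      have ne2: "mm_image {f1, f2} (mm_image (mm_iter {f1, f2} k) (A n)) \<noteq> {}"
        "mm_image {f1, f2} (A (n + k)) \<noteq> {}"
        using mm_ne[of "A n" f1 f2 k] ne[of n] ne[of "n+k"] by (simp_all add: mm_image_pair)
      have "hdist (mm_image {f1, f2} (mm_image (mm_iter {f1, f2} k) (A n))) (A (Suc (n + k)))
          \<le> hdist (mm_image {f1, f2} (mm_image (mm_iter {f1, f2} k) (A n))) (mm_image {f1, f2} (A (n + k)))
            + hdist (mm_image {f1, f2} (A (n + k))) (A (Suc (n + k)))"
        by (rule hdist_triangle[OF bd ne2 ne])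
      then show ?thesis unfolding jk mm_image_Suc using a step[of "n+k"] by simp
    qed
  qed
qed


lemma A12:
  assumes bd: "bounded (UNIV::'a::metric_space set)"
    and c1: "continuous_on UNIV (f1::'a \<Rightarrow> 'a)" and c2: "continuous_on UNIV f2"
    and k: "k > 0" and sh: "shadowing {f1, f2}"
  shows "shadowing (mm_iter {f1, f2} k)"
  unfolding shadowing_def
proof (intro allI impI)
  fix \<epsilon> :: real assume "\<epsilon> > 0"
  then obtain \<delta> where d: "\<delta> > 0" "\<forall>A. pseudo_orbit {f1, f2} \<delta> A \<longrightarrow>
        (\<exists>y. \<forall>n. hdist (mm_orbit {f1, f2} n y) (A n) < \<epsilon>)"
    using sh unfolding shadowing_def by blast
  show "\<exists>\<delta>>0. \<forall>A. pseudo_orbit (mm_iter {f1, f2} k) \<delta> A \<longrightarrow>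
          (\<exists>y. \<forall>n. hdist (mm_orbit (mm_iter {f1, f2} k) n y) (A n) < \<epsilon>)"
  proof (intro exI[of _ \<delta>] conjI allI impI)
    show "\<delta> > 0" by (rule d(1))
    fix A assume po: "pseudo_orbit (mm_iter {f1, f2} k) \<delta> A"
    have ne: "\<And>n. A n \<noteq> {}" and cp: "\<And>n. compact (A n)" and A0: "\<exists>x0. A 0 = {x0}"
      and st: "\<And>n. hdist (mm_image (mm_iter {f1, f2} k) (A n)) (A (Suc n)) \<le> \<delta>"
      using po unfolding pseudo_orbit_def by auto
    define B where "B m = mm_image (mm_iter {f1, f2} (m mod k)) (A (m div k))" for m
    have poB: "pseudo_orbit {f1, f2} \<delta> B"
      unfolding pseudo_orbit_def
    proof (intro conjI allI)
      fix m
      show "B m \<noteq> {}" unfolding B_def using mm_ne[OF ne] by blast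
      show "compact (B m)" unfolding B_def using mm_cpt[OF c1 c2 cp] by blast
      show "hdist (mm_image {f1, f2} (B m)) (B (Suc m)) \<le> \<delta>"
      proof (cases "Suc (m mod k) = k")
        case True
        then have e1: "Suc m mod k = 0" "Suc m div k = Suc (m div k)"
          by (simp_all add: mod_Suc div_Suc)
        have "mm_image {f1, f2} (B m) = mm_image (mm_iter {f1, f2} k) (A (m div k))"
          unfolding B_def mm_image_Suc[symmetric] True ..
        moreover have "B (Suc m) = A (Suc (m div k))" unfolding B_def e1 by simp
        ultimately show ?thesis using st by simp
      next
        case False
        then have e1: "Suc m mod k = Suc (m mod k)" "Suc m div k = m div k"
          by (simp_all add: mod_Suc div_Suc)
        have "mm_image {f1, f2} (B m) = B (Suc m)"
          unfolding B_def mm_image_Suc[symmetric] e1 ..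
        moreover have "B (Suc m) \<noteq> {}" unfolding B_def using mm_ne[OF ne] by blast
        ultimately show ?thesis using hdist_self[OF bd] d(1) by (metis order_trans less_imp_le)
      qed
    next
      show "\<exists>x0. B 0 = {x0}" unfolding B_def using A0 by simp
    qed
    then obtain y where y: "\<forall>n. hdist (mm_orbit {f1, f2} n y) (B n) < \<epsilon>" using d(2) by blast
    show "\<exists>y. \<forall>n. hdist (mm_orbit (mm_iter {f1, f2} k) n y) (A n) < \<epsilon>"
    proof (intro exI[of _ y] allI)
      fix n
      have "mm_orbit (mm_iter {f1, f2} k) n y = mm_orbit {f1, f2} (k*n) y"
        by (simp only: mm_orbit_image mm_image_iter_iter)
      moreover have "B (k*n) = A n" unfolding B_def using k by simp
      ultimately show "hdist (mm_orbit (mm_iter {f1, f2} k) n y) (A n) < \<epsilon>" using y by metis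
    qed
  qed
qed

lemma A31:
  assumes bd: "bounded (UNIV::'a::metric_space set)"
    and u1: "uniformly_continuous_on UNIV (f1::'a \<Rightarrow> 'a)" and u2: "uniformly_continuous_on UNIV f2"
    and k: "k > 0" and sh: "shadowing (mm_iter {f1, f2} k)"
  shows "shadowing {f1, f2}"
  unfolding shadowing_def
proof (intro allI impI)
  fix \<epsilon> :: real assume ep: "\<epsilon> > 0"
  then have e4: "\<epsilon>/4 > 0" by simp
  obtain \<eta> where eta: "\<eta> > 0" "\<forall>j\<le>k. \<forall>A B. A \<noteq> {} \<longrightarrow> B \<noteq> {} \<longrightarrow> hdist A B \<le> \<eta> \<longrightarrow>
            hdist (mm_image (mm_iter {f1, f2} j) A) (mm_image (mm_iter {f1, f2} j) B) \<le> \<epsilon>/4"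
    using uc_upto[OF bd u1 u2 e4] by blast
  obtain \<delta>1 where d1: "\<delta>1 > 0" "\<forall>A. pseudo_orbit (mm_iter {f1, f2} k) \<delta>1 A \<longrightarrow>
        (\<exists>y. \<forall>n. hdist (mm_orbit (mm_iter {f1, f2} k) n y) (A n) < \<eta>)"
    using sh eta(1) unfolding shadowing_def by blast
  have m0: "min \<delta>1 (\<epsilon>/4) > 0" using d1(1) e4 by simp
  obtain \<delta> where d: "\<delta> > 0" "\<forall>A. pseudo_orbit {f1, f2} \<delta> A \<longrightarrow>
            (\<forall>j\<le>k. \<forall>n. hdist (mm_image (mm_iter {f1, f2} j) (A n)) (A (n + j)) \<le> min \<delta>1 (\<epsilon>/4))"
    using po_close[OF bd u1 u2 m0] by blast
  show "\<exists>\<delta>>0. \<forall>A. pseudo_orbit {f1, f2} \<delta> A \<longrightarrow>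
          (\<exists>y. \<forall>n. hdist (mm_orbit {f1, f2} n y) (A n) < \<epsilon>)"
  proof (intro exI[of _ \<delta>] conjI allI impI)
    show "\<delta> > 0" by (rule d(1))
    fix A assume po: "pseudo_orbit {f1, f2} \<delta> A"
    have ne: "\<And>n. A n \<noteq> {}" and cp: "\<And>n. compact (A n)" and A0: "\<exists>x0. A 0 = {x0}"
      using po unfolding pseudo_orbit_def by auto
    have cl: "\<And>j n. j \<le> k \<Longrightarrow> hdist (mm_image (mm_iter {f1, f2} j) (A n)) (A (n + j)) \<le> min \<delta>1 (\<epsilon>/4)"
    proof -
      fix j n assume "j \<le> k"
      have "\<forall>j\<le>k. \<forall>n. hdist (mm_image (mm_iter {f1, f2} j) (A n)) (A (n + j)) \<le> min \<delta>1 (\<epsilon>/4)"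
        using d(2)[rule_format, OF po] by blast
      then show "hdist (mm_image (mm_iter {f1, f2} j) (A n)) (A (n + j)) \<le> min \<delta>1 (\<epsilon>/4)"
        using \<open>j \<le> k\<close> by simp
    qed
    define C where "C n = A (k*n)" for n
    have poC: "pseudo_orbit (mm_iter {f1, f2} k) \<delta>1 C"
      unfolding pseudo_orbit_def
    proof (intro conjI allI)
      fix n
      show "C n \<noteq> {}" "compact (C n)" unfolding C_def using ne cp by auto
      have "hdist (mm_image (mm_iter {f1, f2} k) (A (k*n))) (A (k*n + k)) \<le> min \<delta>1 (\<epsilon>/4)"
        using cl[of k "k*n"] by simp
      moreover have "k * Suc n = k*n + k" by simp
      ultimately show "hdist (mm_image (mm_iter {f1, f2} k) (C n)) (C (Suc n)) \<le> \<delta>1"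
        unfolding C_def by (metis min.boundedE)
    next
      show "\<exists>x0. C 0 = {x0}" unfolding C_def using A0 by simp
    qed
    then obtain y where y: "\<forall>n. hdist (mm_orbit (mm_iter {f1, f2} k) n y) (C n) < \<eta>"
      using d1(2) by blast
    show "\<exists>y. \<forall>n. hdist (mm_orbit {f1, f2} n y) (A n) < \<epsilon>"
    proof (intro exI[of _ y] allI)
      fix m
      define n where "n = m div k"
      define j where "j = m mod k"
      have jk: "j \<le> k" unfolding j_def using k by simp
      have m: "m = k*n + j" unfolding n_def j_def by simp
      define P where "P = mm_orbit (mm_iter {f1, f2} k) n y"
      have P: "P = mm_image (mm_iter {f1, f2} (k*n)) {y}"
        unfolding P_def by (simp only: mm_orbit_image mm_image_iter_iter)
      have Pne: "P \<noteq> {}" unfolding P using mm_ne[of "{y}"] by simp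
      have orb: "mm_orbit {f1, f2} m y = mm_image (mm_iter {f1, f2} j) P"
        unfolding P mm_orbit_image m by (simp only: add.commute[of "k*n" j] mm_image_add)
      have h1: "hdist P (A (k*n)) \<le> \<eta>" using y[rule_format, of n] unfolding P_def C_def by simp
      have t1: "hdist (mm_image (mm_iter {f1, f2} j) P) (mm_image (mm_iter {f1, f2} j) (A (k*n))) \<le> \<epsilon>/4"
        using eta(2)[rule_format, OF jk Pne ne h1] .
      have t2: "hdist (mm_image (mm_iter {f1, f2} j) (A (k*n))) (A (k*n + j)) \<le> \<epsilon>/4"
        using cl[OF jk, of "k*n"] by simp
      have "hdist (mm_image (mm_iter {f1, f2} j) P) (A m)
          \<le> hdist (mm_image (mm_iter {f1, f2} j) P) (mm_image (mm_iter {f1, f2} j) (A (k*n)))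
            + hdist (mm_image (mm_iter {f1, f2} j) (A (k*n))) (A (k*n + j))"
        unfolding m by (rule hdist_triangle[OF bd mm_ne[OF Pne] mm_ne[OF ne] ne])
      then show "hdist (mm_orbit {f1, f2} m y) (A m) < \<epsilon>" unfolding orb using t1 t2 ep by linarith
    qed
  qed
qed

theorem theorem4p1:
  fixes f1 f2 :: "'a::metric_space \<Rightarrow> 'a"
  assumes "compact (UNIV :: 'a set)"
    and "continuous_on UNIV f1" and "continuous_on UNIV f2"
  shows "(shadowing {f1, f2} \<longleftrightarrow> (\<forall>k::nat. k > 1 \<longrightarrow> shadowing (mm_iter {f1, f2} k)))
       \<and> ((\<forall>k::nat. k > 1 \<longrightarrow> shadowing (mm_iter {f1, f2} k))
            \<longleftrightarrow> (\<exists>k::nat. k > 1 \<and> shadowing (mm_iter {f1, f2} k)))"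
proof -
  have bd: "bounded (UNIV :: 'a set)" using assms(1) compact_imp_bounded by blast
  have u1: "uniformly_continuous_on UNIV f1" using compact_uniformly_continuous assms(1,2) by blast
  have u2: "uniformly_continuous_on UNIV f2" using compact_uniformly_continuous assms(1,3) by blast
  have i12: "shadowing (mm_iter {f1, f2} k)" if "k > 0" "shadowing {f1, f2}" for k
    using A12[OF bd assms(2,3) that] .
  have i31: "shadowing {f1, f2}" if "k > 0" "shadowing (mm_iter {f1, f2} k)" for k
    using A31[OF bd u1 u2 that] .
  have a: "shadowing {f1, f2} \<longleftrightarrow> (\<forall>k::nat. k > 1 \<longrightarrow> shadowing (mm_iter {f1, f2} k))"
  proof
    assume "shadowing {f1, f2}"
    then show "\<forall>k::nat. k > 1 \<longrightarrow> shadowing (mm_iter {f1, f2} k)" using i12 by simp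
  next
    assume "\<forall>k::nat. k > 1 \<longrightarrow> shadowing (mm_iter {f1, f2} k)"
    then have "shadowing (mm_iter {f1, f2} 2)" by simp
    then show "shadowing {f1, f2}" using i31[of 2] by simp
  qed
  have b: "(\<forall>k::nat. k > 1 \<longrightarrow> shadowing (mm_iter {f1, f2} k))
            \<longleftrightarrow> (\<exists>k::nat. k > 1 \<and> shadowing (mm_iter {f1, f2} k))"
  proof
    assume "\<forall>k::nat. k > 1 \<longrightarrow> shadowing (mm_iter {f1, f2} k)"
    then show "\<exists>k::nat. k > 1 \<and> shadowing (mm_iter {f1, f2} k)" by (intro exI[of _ 2]) simp
  next
    assume "\<exists>k::nat. k > 1 \<and> shadowing (mm_iter {f1, f2} k)"
    then obtain k :: nat where "k > 1" "shadowing (mm_iter {f1, f2} k)" by blast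
    then have "shadowing {f1, f2}" using i31[of k] by simp
    then show "\<forall>k::nat. k > 1 \<longrightarrow> shadowing (mm_iter {f1, f2} k)" using i12 by simp
  qed
  show ?thesis using a b by blast
qed

end
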